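(* Let $(X,d)$ be a metric space, let $k\ge1$, let $p_1,\dots,p_k\in X$, and define $$\mu_P(x,y)=\prod_{i=1}^k\big[d(x,y)+\sqrt{d(x,p_i)d(y,p_i)}\big],\qquad x,y\in X.$$ Then for all $x,y,z\in X$, $$\mu_P(x,y)\leq \Big(\frac{27}{2}\Big)^k\big(\mu_P(x,z)+\mu_P(z,y)\big).$$ Moreover, for all $x,y,z,w\in X$, $$\mu_P(x,y)\mu_P(z,w)\leq 4\Big(\frac{27}{2}\Big)^{2k}\max\{\mu_P(x,z)\mu_P(y,w),\ \mu_P(x,w)\mu_P(y,z)\}.$$ *)

theory Defs
  imports "HOL-Analysis.Analysis"
begin

definition muP :: "nat \<Rightarrow> (nat \<Rightarrow> 'a::metric_space) \<Rightarrow> 'a \<Rightarrow> 'a \<Rightarrow> real" where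
  "muP k p x y = (\<Prod>i=1..k. dist x y + sqrt (dist x (p i) * dist y (p i)))"

end

theory Submission
  imports Defs
begin

lemma fac_le:
  fixes x y z q :: "'a::metric_space"
  assumes h: "dist x y \<le> 2 * dist x z"
  shows "dist x y + sqrt (dist x q * dist y q) \<le> 5 * (dist x z + sqrt (dist x q * dist z q))"
proof -
  define a where "a = dist x q"
  define b where "b = dist y q"
  define c where "c = dist z q"
  define t where "t = dist x y"
  define s where "s = dist x z"
  have a0: "a \<ge> 0" "b \<ge> 0" "c \<ge> 0" "t \<ge> 0" "s \<ge> 0" unfolding a_def b_def c_def t_def s_def by auto
  have bt: "b \<le> a + t" unfolding a_def b_def t_def by (metis dist_commute dist_triangle add.commute)
  have ac: "a \<le> s + c" unfolding a_def s_def c_def by (metis dist_triangle)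
  have g1: "sqrt (a * b) \<le> (a + b) / 2" using arith_geo_mean_sqrt a0 by blast
  have sq0: "sqrt (a*c) \<ge> 0" using a0 by simp
  have g2: "a / 2 \<le> s + sqrt (a * c)"
  proof (cases "c \<ge> a/2")
    case True
    have aa: "a*a \<le> a*(2*c)" using True a0 by (intro mult_left_mono) auto
    have "(a/2)^2 \<le> a * c" 
    proof -
      have "0 \<le> a*c" using a0 by simp
      moreover have "a*(2*c) = 2*(a*c)" by simp
      ultimately have "a*a \<le> 4*(a*c)" using aa by linarith
      thus ?thesis by (simp add: power2_eq_square)
    qed
    hence "sqrt ((a/2)^2) \<le> sqrt (a*c)" by (rule real_sqrt_le_mono)
    thus ?thesis using a0 by simp
  next
    case False
    thus ?thesis using ac sq0 by linarith
  qed
  have "t + sqrt (a*b) \<le> 5 * (s + sqrt (a*c))"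
  proof -
    have ht: "t \<le> 2 * s" using h unfolding t_def s_def .
    have g1': "2 * sqrt (a*b) \<le> a + b" using g1 by simp
    have e1: "2 * t + 2 * sqrt (a*b) \<le> 3 * t + 2 * a" using g1' bt by linarith
    have e2: "a \<le> 2 * s + 2 * sqrt (a*c)" using g2 by simp
    have "t + sqrt (a*b) \<le> 5 * s + 5 * sqrt (a*c)" using e1 e2 ht sq0 by linarith
    thus ?thesis by (simp add: distrib_left)
  qed
  thus ?thesis unfolding a_def b_def c_def t_def s_def .
qed

lemma muP_nonneg: "muP k p x y \<ge> 0"
  unfolding muP_def by (intro prod_nonneg) auto

lemma muP_sym: "muP k p x y = muP k p y x"
  unfolding muP_def by (simp add: dist_commute mult.commute)

lemma muP_le:
  assumes "\<And>i. dist x y + sqrt (dist x (p i) * dist y (p i)) \<le> 5 * (dist u v + sqrt (dist u (p i) * dist v (p i)))"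
  shows "muP k p x y \<le> 5 ^ k * muP k p u v"
proof -
  have "muP k p x y \<le> (\<Prod>i=1..k. 5 * (dist u v + sqrt (dist u (p i) * dist v (p i))))"
    unfolding muP_def by (intro prod_mono) (use assms in auto)
  also have "\<dots> = 5 ^ k * muP k p u v" unfolding muP_def prod.distrib by simp
  finally show ?thesis .
qed

lemma tri: "muP k p x y \<le> 5 ^ k * max (muP k p x z) (muP k p z y)"
proof (cases "dist x y \<le> 2 * dist x z")
  case True
  have "muP k p x y \<le> 5 ^ k * muP k p x z" by (rule muP_le) (rule fac_le[OF True])
  thus ?thesis by (smt (verit) zero_le_power mult_left_mono max.cobounded1)
next
  case False
  have "dist x y \<le> dist x z + dist z y" by (rule dist_triangle)
  hence h: "dist y x \<le> 2 * dist y z" using False by (simp add: dist_commute)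
  have "muP k p y x \<le> 5 ^ k * muP k p y z" by (rule muP_le) (rule fac_le[OF h])
  hence "muP k p x y \<le> 5 ^ k * muP k p z y" by (simp add: muP_sym)
  thus ?thesis by (smt (verit) zero_le_power mult_left_mono max.cobounded2)
qed

lemma H: fixes X Y Z W :: real
  assumes "0 \<le> Y" "0 \<le> Z" "0 \<le> W" "Y \<le> X" "Z \<le> X" "W \<le> X"
  shows "max Z W * max Y W \<le> max (X*W) (Y*Z)"
proof (cases "Z \<le> W")
  case True
  then show ?thesis
  proof (cases "Y \<le> W")
    case True
    with \<open>Z \<le> W\<close> have "max Z W * max Y W = W * W" by simp
    also have "\<dots> \<le> X * W" using assms by (simp add: mult_right_mono)
    finally show ?thesis by linarith
  next
    case False
    with \<open>Z \<le> W\<close> have "max Z W * max Y W = W * Y" by simp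
    also have "\<dots> \<le> X * W" using assms False by (metis mult.commute mult_left_mono order.trans less_le_not_le nle_le)
    finally show ?thesis by linarith
  qed
next
  case False
  then show ?thesis
  proof (cases "Y \<le> W")
    case True
    with False have "max Z W * max Y W = Z * W" by simp
    also have "\<dots> \<le> X * W" using assms by (simp add: mult_right_mono)
    finally show ?thesis by linarith
  next
    case F2: False
    with False have "max Z W * max Y W = Y * Z" by (simp add: mult.commute)
    thus ?thesis by linarith
  qed
qed

lemma m1: fixes A B C D :: real
  assumes "A \<ge> 0" "B \<ge> 0" "C \<ge> 0" "D \<ge> 0"
  shows "min (max A D) (max C B) * min (max A C) (max D B) \<le> max (A*B) (C*D)"
proof -
  have mm: "\<And>a b c d::real. 0 \<le> a \<Longrightarrow> 0 \<le> b \<Longrightarrow> a \<le> c \<Longrightarrow> b \<le> d \<Longrightarrow> a*b \<le> c*d"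
    by (simp add: mult_mono)
  have n1: "0 \<le> min (max A D) (max C B)" "0 \<le> min (max A C) (max D B)" using assms by auto
  consider "B \<le> A" "C \<le> A" "D \<le> A" | "A \<le> B" "C \<le> B" "D \<le> B" | "A \<le> C" "B \<le> C" "D \<le> C"
    | "A \<le> D" "B \<le> D" "C \<le> D" by linarith
  then show ?thesis
  proof cases
    case 1
    have "min (max A D) (max C B) * min (max A C) (max D B) \<le> max C B * max D B"
      by (rule mm[OF n1]) auto
    also have "\<dots> \<le> max (A*B) (D*C)" using H[of D C B A] 1 assms by simp
    finally show ?thesis by (simp add: mult.commute)
  next
    case 2
    have "min (max A D) (max C B) * min (max A C) (max D B) \<le> max D A * max C A"
      by (rule mm[OF n1]) auto
    also have "\<dots> \<le> max (B*A) (C*D)" using H[of C D A B] 2 assms by simp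
    finally show ?thesis by (simp add: mult.commute)
  next
    case 3
    have "min (max A D) (max C B) * min (max A C) (max D B) \<le> max A D * max B D"
      by (rule mm[OF n1]) auto
    also have "\<dots> \<le> max (C*D) (B*A)" using H[of B A D C] 3 assms by simp
    finally show ?thesis by (simp add: mult.commute max.commute)
  next
    case 4
    have "min (max A D) (max C B) * min (max A C) (max D B) \<le> max B C * max A C"
      by (rule mm[OF n1]) auto
    also have "\<dots> \<le> max (D*C) (A*B)" using H[of A B C D] 4 assms by simp
    finally show ?thesis by (simp add: mult.commute max.commute)
  qed
qed
lemma comb:
  fixes A B C D P Q K :: real
  assumes "A \<ge> 0" "B \<ge> 0" "C \<ge> 0" "D \<ge> 0" "P \<ge> 0" "Q \<ge> 0" "K \<ge> 0"
    and "P \<le> K * max A D" "P \<le> K * max C B" "Q \<le> K * max A C" "Q \<le> K * max D B"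
  shows "P * Q \<le> K^2 * max (A*B) (C*D)"
proof -
  have p: "P \<le> K * min (max A D) (max C B)" using assms by (simp add: min_def)
  have q: "Q \<le> K * min (max A C) (max D B)" using assms by (simp add: min_def)
  have "P * Q \<le> (K * min (max A D) (max C B)) * (K * min (max A C) (max D B))"
    using p q assms by (intro mult_mono) auto
  also have "\<dots> = K^2 * (min (max A D) (max C B) * min (max A C) (max D B))"
    by (simp add: power2_eq_square algebra_simps)
  also have "\<dots> \<le> K^2 * max (A*B) (C*D)" using m1[OF assms(1-4)] by (intro mult_left_mono) auto
  finally show ?thesis .
qed

theorem lemma3p5:
  fixes p :: "nat \<Rightarrow> 'a::metric_space" and k :: nat
  assumes "k \<ge> 1"
  shows "(\<forall>x y z. muP k p x y \<le> (27/2) ^ k * (muP k p x z + muP k p z y)) \<and>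
         (\<forall>x y z w. muP k p x y * muP k p z w
           \<le> 4 * (27/2) ^ (2*k) * max (muP k p x z * muP k p y w) (muP k p x w * muP k p y z))"
proof (intro conjI allI)
  have K: "(5::real) ^ k \<le> (27/2) ^ k" by (intro power_mono) auto
  fix x y z
  have "muP k p x y \<le> 5 ^ k * max (muP k p x z) (muP k p z y)" by (rule tri)
  also have "\<dots> \<le> (27/2) ^ k * (muP k p x z + muP k p z y)"
    using muP_nonneg[of k p x z] muP_nonneg[of k p z y] K
    by (intro mult_mono) auto
  finally show "muP k p x y \<le> (27/2) ^ k * (muP k p x z + muP k p z y)" .
next
  fix x y z w
  let ?K = "(5::real) ^ k"
  have "muP k p x y * muP k p z w \<le> ?K^2 * max (muP k p x z * muP k p y w) (muP k p x w * muP k p y z)"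
  proof (rule comb)
    show "muP k p x y \<le> ?K * max (muP k p x z) (muP k p y z)"
      using tri[of k p x y z] by (simp add: muP_sym[of k p z y])
    show "muP k p x y \<le> ?K * max (muP k p x w) (muP k p y w)"
      using tri[of k p x y w] by (simp add: muP_sym[of k p w y])
    show "muP k p z w \<le> ?K * max (muP k p x z) (muP k p x w)"
      using tri[of k p z w x] by (simp add: muP_sym[of k p z x])
    show "muP k p z w \<le> ?K * max (muP k p y z) (muP k p y w)"
      using tri[of k p z w y] by (simp add: muP_sym[of k p z y])
  qed (auto simp: muP_nonneg)
  also have "\<dots> \<le> 4 * (27/2) ^ (2*k) * max (muP k p x z * muP k p y w) (muP k p x w * muP k p y z)"
  proof (rule mult_right_mono)
    have "?K^2 = (5^2) ^ k" by (metis power_mult mult.commute)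
    also have "\<dots> = 25 ^ k" by simp
    also have "\<dots> \<le> (729/4) ^ k" by (intro power_mono) auto
    also have "\<dots> = (27/2) ^ (2*k)" by (simp add: power_mult power2_eq_square)
    also have "\<dots> \<le> 4 * (27/2) ^ (2*k)" by simp
    finally show "?K^2 \<le> 4 * (27/2) ^ (2*k)" .
    show "0 \<le> max (muP k p x z * muP k p y w) (muP k p x w * muP k p y z)"
      using muP_nonneg[of k p x z] muP_nonneg[of k p y w] by (simp add: le_max_iff_disj)
  qed
  finally show "muP k p x y * muP k p z w \<le> 4 * (27/2) ^ (2*k) * max (muP k p x z * muP k p y w) (muP k p x w * muP k p y z)" .
qed

end
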